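(* Let $k > d \geq 1$ be integers. There is a function $f = f_{k,d} : \mathbb{N} \to \mathbb{R}$ with $f(N) \to 0$ as $N \to \infty$ such that for every even positive integer $n$, setting $N = (k-1)n - k + 2$, there exists an $N$-vertex $k$-graph $H$ with $\delta_d(H) \geq (1/2 - f(N)) \binom{N-d}{k-d}$ that does not contain the $k$-expansion of any $n$-vertex tree all of whose vertex degrees are odd.
   Context: A $k$-graph is a $k$-uniform hypergraph. For a $k$-graph $H$ and $S \subseteq V(H)$, $\deg_H(S)$ is the number of edges containing $S$, and $\delta_d(H)$ is the minimum of $\deg_H(S)$ over all $d$-subsets $S \subseteq V(H)$. The $k$-expansion $T^{(k)}$ of a graph $T$ is the $k$-graph obtained by replacing each edge $uv$ of $T$ by a $k$-edge consisting of $u$, $v$ and $k-2$ new vertices that belong to no other edge. "Contain" means as a (not necessarily induced) subgraph. *)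

theory Defs
  imports Complex_Main
begin

definition kgraph :: "nat \<Rightarrow> 'a set \<Rightarrow> 'a set set \<Rightarrow> bool" where
  "kgraph k V E \<longleftrightarrow> finite V \<and> (\<forall>e\<in>E. e \<subseteq> V \<and> card e = k)"

definition hdeg :: "'a set set \<Rightarrow> 'a set \<Rightarrow> nat" where
  "hdeg E S = card {e\<in>E. S \<subseteq> e}"

definition min_deg :: "nat \<Rightarrow> 'a set \<Rightarrow> 'a set set \<Rightarrow> nat" where
  "min_deg d V E = Min {hdeg E S | S. S \<subseteq> V \<and> card S = d}"

definition simple_graph :: "nat \<Rightarrow> nat set set \<Rightarrow> bool" where
  "simple_graph n T \<longleftrightarrow> (\<forall>e\<in>T. \<exists>u v. e = {u, v} \<and> u \<noteq> v \<and> u < n \<and> v < n)"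

definition adj :: "nat set set \<Rightarrow> nat \<Rightarrow> nat \<Rightarrow> bool" where
  "adj T u v \<longleftrightarrow> {u, v} \<in> T \<and> u \<noteq> v"

definition connected_graph :: "nat \<Rightarrow> nat set set \<Rightarrow> bool" where
  "connected_graph n T \<longleftrightarrow> (\<forall>u<n. \<forall>v<n. (u, v) \<in> {(x, y). adj T x y}\<^sup>*)"

definition is_cycle :: "nat set set \<Rightarrow> nat list \<Rightarrow> bool" where
  "is_cycle T vs \<longleftrightarrow> length vs \<ge> 3 \<and> distinct vs \<and>
     (\<forall>i. Suc i < length vs \<longrightarrow> adj T (vs ! i) (vs ! Suc i)) \<and>
     adj T (last vs) (hd vs)"

definition is_tree :: "nat \<Rightarrow> nat set set \<Rightarrow> bool" where
  "is_tree n T \<longleftrightarrow> simple_graph n T \<and> connected_graph n T \<and> (\<nexists>vs. is_cycle T vs)"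

definition gdeg :: "nat set set \<Rightarrow> nat \<Rightarrow> nat" where
  "gdeg T v = card {e\<in>T. v \<in> e}"

text \<open>Vertices of T^(k): original vertices Inl v, and for each edge e the k-2
  new vertices Inr (e, i), i < k-2.\<close>
definition exp_vertices :: "nat \<Rightarrow> nat \<Rightarrow> nat set set \<Rightarrow> (nat + nat set \<times> nat) set" where
  "exp_vertices k n T = Inl ` {..<n} \<union> {Inr (e, i) | e i. e \<in> T \<and> i < k - 2}"

definition exp_edge :: "nat \<Rightarrow> nat set \<Rightarrow> (nat + nat set \<times> nat) set" where
  "exp_edge k e = Inl ` e \<union> {Inr (e, i) | i. i < k - 2}"

definition exp_edges :: "nat \<Rightarrow> nat set set \<Rightarrow> (nat + nat set \<times> nat) set set" where
  "exp_edges k T = exp_edge k ` T"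

definition contains :: "'a set \<Rightarrow> 'a set set \<Rightarrow> 'b set \<Rightarrow> 'b set set \<Rightarrow> bool" where
  "contains V E V' E' \<longleftrightarrow> (\<exists>\<phi>. inj_on \<phi> V' \<and> \<phi> ` V' \<subseteq> V \<and> (\<forall>F\<in>E'. \<phi> ` F \<in> E))"

end

theory Submission
  imports Defs
begin


lemma card_sup:
  assumes "finite V" "S \<subseteq> V" "card S \<le> k"
  shows "card {e. e \<subseteq> V \<and> card e = k \<and> S \<subseteq> e} = (card V - card S) choose (k - card S)"
proof -
  have fS: "finite S" using assms finite_subset by blast
  have eq: "{e. e \<subseteq> V \<and> card e = k \<and> S \<subseteq> e} = (\<lambda>X. X \<union> S) ` {X. X \<subseteq> V - S \<and> card X = k - card S}"
  proof (rule set_eqI, rule iffI)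
    fix e assume e: "e \<in> {e. e \<subseteq> V \<and> card e = k \<and> S \<subseteq> e}"
    hence 1: "e = (e - S) \<union> S" by blast
    have "card (e - S) = k - card S" using e fS by (simp add: card_Diff_subset)
    moreover have "e - S \<subseteq> V - S" using e by blast
    ultimately show "e \<in> (\<lambda>X. X \<union> S) ` {X. X \<subseteq> V - S \<and> card X = k - card S}" using 1 by blast
  next
    fix e assume "e \<in> (\<lambda>X. X \<union> S) ` {X. X \<subseteq> V - S \<and> card X = k - card S}"
    then obtain X where X: "X \<subseteq> V - S" "card X = k - card S" "e = X \<union> S" by blast
    have fX: "finite X" using X assms finite_subset by blast
    have dj: "X \<inter> S = {}" using X by blast
    have "card e = card X + card S" using card_Un_disjoint[OF fX fS dj] X(3) by simp
    hence "card e = k" using X(2) assms(3) by simp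
    moreover have "e \<subseteq> V" "S \<subseteq> e" using X assms(2) by blast+
    ultimately show "e \<in> {e. e \<subseteq> V \<and> card e = k \<and> S \<subseteq> e}" by blast
  qed
  have inj: "inj_on (\<lambda>X. X \<union> S) {X. X \<subseteq> V - S \<and> card X = k - card S}"
    by (rule inj_onI) blast
  have "card {e. e \<subseteq> V \<and> card e = k \<and> S \<subseteq> e} = card {X. X \<subseteq> V - S \<and> card X = k - card S}"
    unfolding eq by (rule card_image[OF inj])
  also have "\<dots> = card (V - S) choose (k - card S)" using assms by (simp add: n_subsets)
  also have "card (V - S) = card V - card S" using assms fS by (simp add: card_Diff_subset)
  finally show ?thesis .
qed

lemma card_sup0:
  assumes "finite V" "card S > k"
  shows "card {e. e \<subseteq> V \<and> card e = k \<and> S \<subseteq> e} = 0"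
proof -
  have "{e. e \<subseteq> V \<and> card e = k \<and> S \<subseteq> e} = {}"
  proof (rule ccontr)
    assume "{e. e \<subseteq> V \<and> card e = k \<and> S \<subseteq> e} \<noteq> {}"
    then obtain e where "e \<subseteq> V" "card e = k" "S \<subseteq> e" by blast
    hence "card S \<le> k" using assms card_mono finite_subset by metis
    thus False using assms by simp
  qed
  thus ?thesis by (simp only: card.empty)
qed

lemma sum_odd_parity:
  assumes "finite I" "\<And>i. i \<in> I \<Longrightarrow> odd (f i :: nat)"
  shows "even (sum f I) \<longleftrightarrow> even (card I)"
  using assms
proof (induction I rule: finite_induct)
  case empty thus ?case by simp
next
  case (insert x F)
  have "odd (f x)" using insert by simp
  moreover have "even (sum f F) \<longleftrightarrow> even (card F)" using insert by simp
  ultimately show ?case using insert by simp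
qed

lemma conn_card:
  assumes conn: "connected_graph n T" and "1 \<le> n" and fin: "finite T"
  shows "n - 1 \<le> card T"
proof -
  define R where "R = {(x, y). adj T x y}"
  define dd where "dd v = (LEAST m. (0, v) \<in> R ^^ m)" for v
  define par where "par v = (SOME u. (0, u) \<in> R ^^ (dd v - 1) \<and> (u, v) \<in> R)" for v
  have reach: "\<exists>m. (0, v) \<in> R ^^ m" if "v < n" for v
    using conn that assms(2) unfolding connected_graph_def R_def rtrancl_power by auto
  have par: "(0, par v) \<in> R ^^ (dd v - 1) \<and> (par v, v) \<in> R \<and> 1 \<le> dd v" if "v < n" "v \<noteq> 0" for v
  proof -
    have d: "(0, v) \<in> R ^^ dd v" unfolding dd_def using reach[OF that(1)] by (rule LeastI_ex)
    have "dd v \<noteq> 0" proof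
      assume "dd v = 0" thus False using d that by simp qed
    then obtain m where m: "dd v = Suc m" by (cases "dd v") auto
    from d m obtain u where "(0,u) \<in> R ^^ m" "(u, v) \<in> R" by auto
    hence "\<exists>u. (0, u) \<in> R ^^ (dd v - 1) \<and> (u, v) \<in> R" using m by auto
    hence "(0, par v) \<in> R ^^ (dd v - 1) \<and> (par v, v) \<in> R" unfolding par_def by (rule someI_ex)
    thus ?thesis using m by simp
  qed
  have dlt: "dd (par v) < dd v" if "v < n" "v \<noteq> 0" for v
  proof -
    have h: "(0, par v) \<in> R ^^ (dd v - 1)" using par[OF that] by blast
    have "dd (par v) \<le> dd v - 1" unfolding dd_def[of "par v"] by (rule Least_le, rule h)
    moreover have "1 \<le> dd v" using par[OF that] by blast
    ultimately show ?thesis by linarith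
  qed
  define g where "g v = {par v, v}" for v
  have "g ` {1..<n} \<subseteq> T" using par unfolding g_def R_def adj_def by auto
  moreover have "inj_on g {1..<n}"
  proof (rule inj_onI)
    fix v w assume v: "v \<in> {1..<n}" and w: "w \<in> {1..<n}" and eq: "g v = g w"
    show "v = w"
    proof (rule ccontr)
      assume "v \<noteq> w"
      hence "v = par w" "w = par v" using eq unfolding g_def by (auto simp: doubleton_eq_iff)
      thus False using dlt[of v] dlt[of w] v w by auto
    qed
  qed
  moreover note fin
  ultimately show ?thesis using card_inj_on_le[of g "{1..<n}" T] by simp
qed



lemma arith_bound:
  fixes M m C C1 C2 q U d :: nat
  assumes a: "m*C = M*C1" and b: "C2*(M-1) \<le> (m-1)*C1" and c: "q \<le> (d+1)*M"
    and M: "0 < M" and U: "U \<le> (d+3)*C1 + q*C2"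
  shows "U*(M-1) \<le> ((d+3)*m + (m-1)*(d+1)*m)*C"
proof -
  have "U*(M-1) \<le> ((d+3)*C1 + q*C2)*(M-1)" using U by (rule mult_right_mono) simp
  also have "\<dots> = (d+3)*(C1*(M-1)) + q*(C2*(M-1))" by (simp add: algebra_simps)
  also have "\<dots> \<le> (d+3)*(m*C) + q*((m-1)*C1)"
  proof (rule add_mono)
    have "C1*(M-1) \<le> C1*M" by simp
    also have "\<dots> = m*C" using a by simp
    finally show "(d+3)*(C1*(M-1)) \<le> (d+3)*(m*C)" by simp
    show "q*(C2*(M-1)) \<le> q*((m-1)*C1)" using b by simp
  qed
  also have "q*((m-1)*C1) \<le> (m-1)*((d+1)*m*C)"
  proof -
    have "M*(q*C1) = q*(m*C)" using a by (simp add: algebra_simps)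
    also have "\<dots> \<le> ((d+1)*M)*(m*C)" using c by (rule mult_right_mono) simp
    finally have "M*(q*C1) \<le> M*((d+1)*m*C)" by (simp add: algebra_simps)
    hence "q*C1 \<le> (d+1)*m*C" using M by simp
    hence "(m-1)*(q*C1) \<le> (m-1)*((d+1)*m*C)" by simp
    thus ?thesis by (simp add: algebra_simps)
  qed
  hence "(d+3)*(m*C) + q*((m-1)*C1) \<le> (d+3)*(m*C) + (m-1)*((d+1)*m*C)" by simp
  also have "\<dots> = ((d+3)*m + (m-1)*(d+1)*m)*C" by (simp add: algebra_simps)
  finally show ?thesis .
qed

definition tau :: "nat \<Rightarrow> nat \<Rightarrow> nat" where
  "tau i x = (if x = 2*i then Suc (2*i) else if x = Suc (2*i) then 2*i else x)"

lemma tau_invol[simp]: "tau i (tau i x) = x"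
  unfolding tau_def by auto

lemma mem_tau_img: "x \<in> tau i ` e \<longleftrightarrow> tau i x \<in> e"
proof
  assume "x \<in> tau i ` e" then obtain y where "y \<in> e" "x = tau i y" by blast
  thus "tau i x \<in> e" by simp
next
  assume "tau i x \<in> e" hence "tau i (tau i x) \<in> tau i ` e" by blast
  thus "x \<in> tau i ` e" by simp
qed

lemma inj_tau: "inj (tau i)"
  by (metis injI tau_invol)

lemma tau_img_img[simp]: "tau i ` tau i ` e = e"
  by (auto simp: mem_tau_img)

lemma tau_other: "x \<noteq> 2*i \<Longrightarrow> x \<noteq> Suc (2*i) \<Longrightarrow> tau i x = x"
  unfolding tau_def by auto

lemma even_ne_suc: "even (x::nat) \<Longrightarrow> x \<noteq> Suc (2*i)" by presburger

lemma tau_A: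
  assumes "i < q"
  shows "tau i ` e \<inter> {x. x < 2*q \<and> even x} =
     (if Suc (2*i) \<in> e then insert (2*i) (e \<inter> {x. x < 2*q \<and> even x}) else e \<inter> {x. x < 2*q \<and> even x}) - (if 2*i \<in> e \<and> Suc (2*i) \<notin> e then {2*i} else {})"
  (is "?L = ?R")
proof (rule set_eqI)
  fix x
  show "x \<in> ?L \<longleftrightarrow> x \<in> ?R"
  proof (cases "x = 2*i")
    case True thus ?thesis using assms by (auto simp: mem_tau_img tau_def)
  next
    case False
    show ?thesis
    proof (cases "even x")
      case True
      hence "tau i x = x" using False even_ne_suc tau_other by blast
      thus ?thesis using False by (auto simp: mem_tau_img)
    next
      case F2: False thus ?thesis by (auto)
    qed
  qed
qed

lemma tau_parity:
  assumes "i < q" "finite e" "(2*i \<in> e) \<noteq> (Suc (2*i) \<in> e)"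
  shows "odd (card (tau i ` e \<inter> {x. x < 2*q \<and> even x})) \<longleftrightarrow> even (card (e \<inter> {x. x < 2*q \<and> even x}))"
proof -
  let ?A = "{x. x < 2*q \<and> even x}"
  have f: "finite (e \<inter> ?A)" using assms by simp
  show ?thesis
  proof (cases "2*i \<in> e")
    case True
    hence "Suc (2*i) \<notin> e" using assms by simp
    hence eq: "tau i ` e \<inter> ?A = (e \<inter> ?A) - {2*i}" using tau_A[OF assms(1), of e] True by simp
    have m: "2*i \<in> e \<inter> ?A" using True assms by simp
    hence "card ((e \<inter> ?A) - {2*i}) = card (e \<inter> ?A) - 1" using f by (simp add: card_Diff_singleton)
    moreover have "card (e \<inter> ?A) \<ge> 1" using m f by (metis One_nat_def Suc_leI card_gt_0_iff empty_iff)
    ultimately show ?thesis using eq by (cases "card (e \<inter> ?A)") auto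
  next
    case False
    hence "Suc (2*i) \<in> e" using assms by simp
    hence eq: "tau i ` e \<inter> ?A = insert (2*i) (e \<inter> ?A)" using tau_A[OF assms(1), of e] False by simp
    have "2*i \<notin> e \<inter> ?A" using False by simp
    hence "card (insert (2*i) (e \<inter> ?A)) = Suc (card (e \<inter> ?A))" using f by simp
    thus ?thesis using eq by simp
  qed
qed



lemma deg_bound:
  fixes N d k :: nat and S :: "nat set"
  assumes d1: "1 \<le> d" and dk: "d < k" and Nd: "d + 2 \<le> N"
    and SV: "S \<subseteq> {..<N}" and cS: "card S = d"
  defines "q \<equiv> 2 * (N div 4)"
  defines "A \<equiv> {x. x < 2*q \<and> even x}"
  defines "E \<equiv> {e. e \<subseteq> {..<N} \<and> card e = k \<and> odd (card (e \<inter> A))}"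
  shows "((N-d) choose (k-d)) * (N-d-1) \<le> 2 * hdeg E S * (N-d-1)
           + ((d+3)*(k-d) + (k-d-1)*(d+1)*(k-d)) * ((N-d) choose (k-d))"
proof -
  define V where "V = {..<N}"
  define K where "K = {e. e \<subseteq> V \<and> card e = k \<and> S \<subseteq> e}"
  define C where "C = (N-d) choose (k-d)"
  define C1 where "C1 = (N-d-1) choose (k-d-1)"
  define C2 where "C2 = (if d + 2 \<le> k then (N-d-2) choose (k-d-2) else 0)"
  define clean where "clean i \<longleftrightarrow> i < q \<and> 2*i \<notin> S \<and> Suc (2*i) \<notin> S" for i
  define spl where "spl e i \<longleftrightarrow> (2*i \<in> e) \<noteq> (Suc (2*i) \<in> e)" for e i
  define Sp where "Sp = {e \<in> K. \<exists>i. clean i \<and> spl e i}"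
  define Uns where "Uns = K - Sp"
  define j where "j e = (LEAST i. clean i \<and> spl e i)" for e
  define sg where "sg e = tau (j e) ` e" for e
  have fV: "finite V" unfolding V_def by simp
  have q2N: "2*q \<le> N" unfolding q_def by simp
  have cK: "card K = C" unfolding K_def C_def V_def using card_sup[of "{..<N}" S k] SV cS dk by simp
  have fK: "finite K" unfolding K_def using fV by (rule rev_finite_subset[OF finite_Pow_iff[THEN iffD2]]) auto
  have hd: "hdeg E S = card {e \<in> K. odd (card (e \<inter> A))}"
    unfolding hdeg_def E_def K_def V_def by (rule arg_cong[where f=card]) auto
  have sgp: "sg e \<in> Sp \<and> j (sg e) = j e \<and> sg (sg e) = e \<and>
      (odd (card (sg e \<inter> A)) \<longleftrightarrow> even (card (e \<inter> A)))" if eSp: "e \<in> Sp" for e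
  proof -
    let ?i = "j e"
    have ex: "\<exists>i. clean i \<and> spl e i" using eSp unfolding Sp_def by blast
    have ci: "clean ?i \<and> spl e ?i" unfolding j_def using ex by (rule LeastI_ex)
    have eK: "e \<in> K" using eSp unfolding Sp_def by blast
    have fe: "finite e" using eK fV unfolding K_def by (blast intro: finite_subset)
    have iq: "?i < q" using ci unfolding clean_def by blast
    have spl_eq: "spl (sg e) i' \<longleftrightarrow> spl e i'" for i'
    proof (cases "i' = ?i")
      case True thus ?thesis unfolding spl_def sg_def by (auto simp: mem_tau_img tau_def)
    next
      case False
      hence "tau ?i (2*i') = 2*i'" "tau ?i (Suc (2*i')) = Suc (2*i')"
        by (auto simp: tau_def)
      thus ?thesis unfolding spl_def sg_def by (simp add: mem_tau_img)
    qed
    have sgK: "sg e \<in> K"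
    proof -
      have "sg e \<subseteq> V"
      proof
        fix x assume "x \<in> sg e"
        then obtain y where y: "y \<in> e" "x = tau ?i y" unfolding sg_def by blast
        have "y < N" using y eK unfolding K_def V_def by blast
        moreover have "Suc (2 * ?i) < N" using iq q2N by simp
        ultimately show "x \<in> V" using y unfolding V_def tau_def by auto
      qed
      moreover have "card (sg e) = k" using eK unfolding sg_def K_def
        by (simp add: card_image inj_on_subset[OF inj_tau])
      moreover have "S \<subseteq> sg e"
      proof
        fix s assume s: "s \<in> S"
        hence "tau ?i s = s" using ci tau_other unfolding clean_def by metis
        thus "s \<in> sg e" using s eK unfolding sg_def K_def by (simp add: mem_tau_img subset_iff)
      qed
      ultimately show ?thesis unfolding K_def by blast
    qed
    have jeq: "j (sg e) = j e" unfolding j_def using spl_eq by simp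
    have "sg e \<in> Sp" using sgK spl_eq ci unfolding Sp_def by blast
    moreover have "sg (sg e) = e" unfolding sg_def[of "sg e"] jeq unfolding sg_def by simp
    moreover have "odd (card (sg e \<inter> A)) \<longleftrightarrow> even (card (e \<inter> A))"
      unfolding sg_def A_def by (rule tau_parity[OF iq fe]) (use ci in \<open>simp add: spl_def\<close>)
    ultimately show ?thesis using jeq by blast
  qed
  have ineq1: "card {e \<in> Sp. even (card (e \<inter> A))} \<le> card {e \<in> Sp. odd (card (e \<inter> A))}"
  proof (rule card_inj_on_le[where f=sg])
    show "inj_on sg {e \<in> Sp. even (card (e \<inter> A))}" by (rule inj_onI) (metis (mono_tags) mem_Collect_eq sgp)
    show "sg ` {e \<in> Sp. even (card (e \<inter> A))} \<subseteq> {e \<in> Sp. odd (card (e \<inter> A))}" using sgp by auto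
    show "finite {e \<in> Sp. odd (card (e \<inter> A))}" using fK unfolding Sp_def by simp
  qed
  have SpK: "Sp \<subseteq> K" unfolding Sp_def by blast
  have "card Sp = card {e \<in> Sp. even (card (e \<inter> A))} + card {e \<in> Sp. odd (card (e \<inter> A))}"
  proof -
    have "Sp = {e \<in> Sp. even (card (e \<inter> A))} \<union> {e \<in> Sp. odd (card (e \<inter> A))}" by blast
    moreover have "finite Sp" using fK SpK finite_subset by blast
    ultimately show ?thesis by (metis (no_types, lifting) card_Un_disjoint disjoint_iff finite_Un mem_Collect_eq)
  qed
  moreover have "card {e \<in> Sp. odd (card (e \<inter> A))} \<le> hdeg E S"
    unfolding hd using fK SpK by (intro card_mono) auto
  ultimately have spb: "card Sp \<le> 2 * hdeg E S" using ineq1 by linarith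
  have cKU: "C = card Sp + card Uns"
    using cK fK SpK unfolding Uns_def by (metis card_Diff_subset card_mono finite_subset le_add_diff_inverse)
  define pa where "pa x = (if even x then Suc x else x - 1)" for x :: nat
  have papa: "pa (pa x) = x" for x unfolding pa_def by presburger
  define D where "D = {x. x < N \<and> x \<notin> S \<and> (2*q \<le> x \<or> pa x \<in> S)}"
  define Cl where "Cl = {i. clean i}"
  define Kx where "Kx x = {e. e \<subseteq> V \<and> card e = k \<and> insert x S \<subseteq> e}" for x
  define Kp where "Kp i = {e. e \<subseteq> V \<and> card e = k \<and> S \<union> {2*i, Suc (2*i)} \<subseteq> e}" for i
  have UnSub: "Uns \<subseteq> (\<Union>x\<in>D. Kx x) \<union> (\<Union>i\<in>Cl. Kp i)"
  proof
    fix e assume eU: "e \<in> Uns"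
    hence eK: "e \<in> K" and nsp: "\<And>i. clean i \<Longrightarrow> \<not> spl e i" unfolding Uns_def Sp_def by auto
    have fe: "finite e" using eK fV unfolding K_def by (blast intro: finite_subset)
    have "\<not> e \<subseteq> S"
    proof
      assume "e \<subseteq> S"
      hence "card e \<le> card S" using SV finite_subset by (metis card_mono finite_lessThan)
      thus False using eK cS dk unfolding K_def by simp
    qed
    then obtain x where x: "x \<in> e" "x \<notin> S" by blast
    have xN: "x < N" using x eK unfolding K_def V_def by blast
    show "e \<in> (\<Union>x\<in>D. Kx x) \<union> (\<Union>i\<in>Cl. Kp i)"
    proof (cases "x \<in> D")
      case True
      hence "e \<in> Kx x" using eK x unfolding K_def Kx_def by blast
      thus ?thesis using True by blast
    next
      case False
      hence x2q: "x < 2*q" and pS: "pa x \<notin> S" using x xN unfolding D_def by auto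
      define i where "i = x div 2"
      have pr: "{2*i, Suc (2*i)} = {x, pa x}"
      proof (cases "even x")
        case True
        hence "2*i = x" "pa x = Suc x" unfolding i_def pa_def by auto
        thus ?thesis by simp
      next
        case False
        hence "Suc (2*i) = x" unfolding i_def by presburger
        moreover have "pa x = 2*i" using False \<open>Suc (2*i) = x\<close> unfolding pa_def by simp
        ultimately show ?thesis by auto
      qed
      have iq: "i < q" using x2q unfolding i_def by simp
      have cl: "clean i" using pr iq x pS unfolding clean_def by (auto simp: doubleton_eq_iff)
      hence "\<not> spl e i" by (rule nsp)
      moreover have "x \<in> {2*i, Suc (2*i)}" "pa x \<in> {2*i, Suc (2*i)}" using pr by auto
      ultimately have "{2*i, Suc (2*i)} \<subseteq> e" using x unfolding spl_def by auto
      hence "e \<in> Kp i" using eK unfolding K_def Kp_def by blast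
      thus ?thesis using cl unfolding Cl_def by blast
    qed
  qed
  have fD: "finite D" unfolding D_def by simp
  have fCl: "finite Cl" unfolding Cl_def clean_def by simp
  have cD: "card D \<le> d + 3"
  proof -
    have "D \<subseteq> {2*q..<N} \<union> pa ` S"
    proof
      fix x assume "x \<in> D"
      thus "x \<in> {2*q..<N} \<union> pa ` S" unfolding D_def using papa by (metis (mono_tags) Un_iff atLeastLessThan_iff image_eqI mem_Collect_eq)
    qed
    moreover have "finite S" using SV finite_subset by auto
    ultimately have "card D \<le> card ({2*q..<N} \<union> pa ` S)" by (intro card_mono) auto
    also have "\<dots> \<le> card {2*q..<N} + card (pa ` S)" by (rule card_Un_le)
    also have "card (pa ` S) \<le> card S" by (rule card_image_le) (use SV finite_subset in auto)
    also have "card {2*q..<N} \<le> 3" unfolding q_def by simp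
    finally show ?thesis using cS by simp
  qed
  have cCl: "card Cl \<le> q" using card_mono[of "{..<q}" Cl] unfolding Cl_def clean_def by auto
  have cKx: "card (Kx x) = C1" if "x \<in> D" for x
  proof -
    have "insert x S \<subseteq> V" "card (insert x S) = d + 1"
      using that SV cS unfolding D_def V_def by (auto simp: card_insert_if finite_subset)
    thus ?thesis unfolding Kx_def C1_def using card_sup[OF fV, of "insert x S" k] dk fV
      unfolding V_def by simp
  qed
  have cKp: "card (Kp i) = C2" if "i \<in> Cl" for i
  proof -
    have i: "i < q" "2*i \<notin> S" "Suc (2*i) \<notin> S" using that unfolding Cl_def clean_def by auto
    have sub: "S \<union> {2*i, Suc (2*i)} \<subseteq> V" using SV i q2N unfolding V_def by auto
    have fS: "finite S" using SV finite_subset by auto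
    have cc: "card (S \<union> {2*i, Suc (2*i)}) = d + 2" using i cS fS by (simp add: card_insert_if)
    show ?thesis
    proof (cases "d + 2 \<le> k")
      case True
      thus ?thesis unfolding Kp_def C2_def using card_sup[OF fV sub] cc unfolding V_def by simp
    next
      case False
      thus ?thesis unfolding Kp_def C2_def using card_sup0[OF fV, of k "S \<union> {2*i, Suc (2*i)}"] cc by simp
    qed
  qed
  have Ub: "card Uns \<le> (d+3)*C1 + q*C2"
  proof -
    have "finite ((\<Union>x\<in>D. Kx x) \<union> (\<Union>i\<in>Cl. Kp i))"
      using fV unfolding Kx_def Kp_def by (intro finite_UnI finite_UN_I fD fCl) (auto intro: rev_finite_subset[of "Pow V"])
    hence "card Uns \<le> card ((\<Union>x\<in>D. Kx x) \<union> (\<Union>i\<in>Cl. Kp i))" using UnSub by (rule card_mono)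
    also have "\<dots> \<le> card (\<Union>x\<in>D. Kx x) + card (\<Union>i\<in>Cl. Kp i)" by (rule card_Un_le)
    also have "card (\<Union>x\<in>D. Kx x) \<le> (\<Sum>x\<in>D. card (Kx x))" using fD by (rule card_UN_le)
    also have "\<dots> = card D * C1" using cKx by simp
    also have "card (\<Union>i\<in>Cl. Kp i) \<le> (\<Sum>i\<in>Cl. card (Kp i))" using fCl by (rule card_UN_le)
    also have "\<dots> = card Cl * C2" using cKp by simp
    finally have "card Uns \<le> card D * C1 + card Cl * C2" by simp
    also have "\<dots> \<le> (d+3)*C1 + q*C2" using cD cCl by (intro add_mono mult_right_mono) auto
    finally show ?thesis .
  qed
  have ba: "(k-d)*C = (N-d)*C1"
  proof -
    have "Suc (k-d-1) * ((N-d) choose Suc (k-d-1)) = (N-d) * ((N-d-1) choose (k-d-1))"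
      by (rule binomial_absorption)
    moreover have h: "Suc (k-d-1) = k - d" using dk by simp
    ultimately show ?thesis unfolding C_def C1_def h by simp
  qed
  have bb: "C2*(N-d-1) \<le> (k-d-1)*C1"
  proof (cases "d + 2 \<le> k")
    case True
    have "Suc (k-d-2) * ((N-d-1) choose Suc (k-d-2)) = (N-d-1) * ((N-d-1-1) choose (k-d-2))"
      by (rule binomial_absorption)
    moreover have h: "Suc (k-d-2) = k-d-1" using True by simp
    moreover have h2: "N-d-1-1 = N-d-2" by simp
    ultimately have "(k-d-1) * C1 = (N-d-1) * C2" unfolding C2_def C1_def h h2 using True by simp
    thus ?thesis by (simp add: algebra_simps)
  next
    case False thus ?thesis unfolding C2_def by simp
  qed
  have qb: "q \<le> (d+1)*(N-d)"
  proof -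
    have "q \<le> N" unfolding q_def by simp
    also have "N \<le> (d+1)*(N-d)"
    proof -
      have "d*1 \<le> d*(N-d)" using Nd by (intro mult_le_mono2) simp
      hence "N \<le> (N-d) + d*(N-d)" using Nd by linarith
      thus ?thesis by simp
    qed
    finally show ?thesis .
  qed
  have "card Uns * (N-d-1) \<le> ((d+3)*(k-d) + (k-d-1)*(d+1)*(k-d))*C"
    using arith_bound[OF ba _ qb _ Ub] bb Nd by simp
  moreover have "C*(N-d-1) = card Sp*(N-d-1) + card Uns*(N-d-1)" using cKU by (simp add: algebra_simps)
  moreover have "card Sp*(N-d-1) \<le> 2 * hdeg E S * (N-d-1)" using spb by simp
  ultimately show ?thesis unfolding C_def by linarith
qed



lemma exp_mem_Inl[simp]: "Inl u \<in> exp_edge k e \<longleftrightarrow> u \<in> e"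
  unfolding exp_edge_def by auto

lemma exp_mem_Inr[simp]: "Inr p \<in> exp_edge k e \<longleftrightarrow> (fst p = e \<and> snd p < k - 2)"
  unfolding exp_edge_def by (cases p) auto

lemma inj_exp_edge: "inj_on (exp_edge k) X"
proof (rule inj_onI)
  fix e e' assume "exp_edge k e = exp_edge k e'"
  hence "\<forall>u. (Inl u \<in> exp_edge k e) = (Inl u \<in> exp_edge k e')" by simp
  thus "e = e'" by auto
qed

lemma deg_exp:
  assumes v: "v \<in> exp_vertices k n T" and od: "\<forall>u<n. odd (gdeg T u)"
  shows "odd (card {F \<in> exp_edges k T. v \<in> F})"
proof (cases v)
  case (Inl u)
  hence u: "u < n" using v unfolding exp_vertices_def by auto
  have "{F \<in> exp_edges k T. v \<in> F} = exp_edge k ` {e \<in> T. u \<in> e}"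
    unfolding exp_edges_def Inl by auto
  hence "card {F \<in> exp_edges k T. v \<in> F} = gdeg T u"
    unfolding gdeg_def by (simp add: card_image inj_exp_edge)
  thus ?thesis using od u by simp
next
  case (Inr p)
  hence p: "fst p \<in> T" "snd p < k - 2" using v unfolding exp_vertices_def by auto
  have "{F \<in> exp_edges k T. v \<in> F} = {exp_edge k (fst p)}"
    unfolding exp_edges_def Inr using p by auto
  thus ?thesis by simp
qed

lemma card_exp_vertices:
  assumes "finite T"
  shows "card (exp_vertices k n T) = n + card T * (k - 2)"
proof -
  have eq: "exp_vertices k n T = Inl ` {..<n} \<union> Inr ` (T \<times> {..<k-2})"
    unfolding exp_vertices_def by auto
  have "card (Inl ` {..<n} \<union> Inr ` (T \<times> {..<k-2}) :: (nat + nat set \<times> nat) set)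
      = card (Inl ` {..<n} :: (nat + nat set \<times> nat) set) + card (Inr ` (T \<times> {..<k-2}) :: (nat + nat set \<times> nat) set)"
    using assms by (intro card_Un_disjoint) auto
  also have "\<dots> = n + card T * (k - 2)"
    by (simp add: card_image card_cartesian_product)
  finally show ?thesis unfolding eq .
qed

lemma tree_finite: "simple_graph n T \<Longrightarrow> finite T"
proof -
  assume "simple_graph n T"
  hence "T \<subseteq> Pow {..<n}" unfolding simple_graph_def by auto
  thus "finite T" by (rule finite_subset) simp
qed

lemma simple_edge_sub: "e \<in> T \<Longrightarrow> simple_graph n T \<Longrightarrow> e \<subseteq> {..<n}"
  unfolding simple_graph_def by fastforce

lemma N_eq:
  fixes n k :: nat
  assumes "2 \<le> n" "3 \<le> k"
  shows "(k - 1) * n - k + 2 = n + (n - 1) * (k - 2)"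
proof -
  define m where "m = n - 2"
  define j where "j = k - 3"
  have m: "n = m + 2" and j: "k = j + 3" using assms unfolding m_def j_def by simp_all
  show ?thesis unfolding m j by (simp add: algebra_simps)
qed




lemma no_embed_odd:
  assumes k3: "3 \<le> k" and n2: "2 \<le> n" and ev: "even n"
    and tree: "is_tree n T" and od: "\<forall>v<n. odd (gdeg T v)"
    and NN: "N = (k - 1) * n - k + 2"
    and AV: "A \<subseteq> {..<N}" and evA: "even (card A)"
    and EA: "\<forall>e\<in>E. odd (card (e \<inter> A))"
  shows "\<not> contains {..<N} E (exp_vertices k n T) (exp_edges k T)"
proof
  assume "contains {..<N} E (exp_vertices k n T) (exp_edges k T)"
  then obtain \<phi> where inj: "inj_on \<phi> (exp_vertices k n T)" and img: "\<phi> ` exp_vertices k n T \<subseteq> {..<N}"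
    and ed: "\<forall>F\<in>exp_edges k T. \<phi> ` F \<in> E" unfolding contains_def by blast
  define Vx where "Vx = exp_vertices k n T"
  define Ex where "Ex = exp_edges k T"
  have fT: "finite T" using tree tree_finite unfolding is_tree_def by blast
  have lo: "n - 1 \<le> card T" using conn_card[of n T] tree fT n2 unfolding is_tree_def by simp
  have cV: "card Vx = n + card T * (k - 2)" unfolding Vx_def by (rule card_exp_vertices[OF fT])
  have "Vx = Inl ` {..<n} \<union> Inr ` (T \<times> {..<k-2})" unfolding Vx_def exp_vertices_def by auto
  hence fVx: "finite Vx" using fT by simp
  have "card Vx \<le> N" using card_inj_on_le[OF inj img] unfolding Vx_def by simp
  hence "card T * (k - 2) \<le> (n - 1) * (k - 2)" using cV N_eq[OF n2 k3] NN by simp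
  hence "card T \<le> n - 1" using k3 by simp
  hence cT: "card T = n - 1" using lo by simp
  hence cVN: "card Vx = N" using cV N_eq[OF n2 k3] NN by simp
  have imgV: "\<phi> ` Vx = {..<N}"
  proof (rule card_subset_eq)
    show "\<phi> ` Vx \<subseteq> {..<N}" using img unfolding Vx_def .
    show "card (\<phi> ` Vx) = card {..<N}" using cVN card_image[OF inj] unfolding Vx_def by simp
  qed simp
  define A' where "A' = {v \<in> Vx. \<phi> v \<in> A}"
  have "\<phi> ` A' = A"
  proof
    show "\<phi> ` A' \<subseteq> A" unfolding A'_def by blast
    show "A \<subseteq> \<phi> ` A'"
    proof
      fix a assume a: "a \<in> A"
      hence "a \<in> \<phi> ` Vx" using AV imgV by blast
      then obtain v where "v \<in> Vx" "a = \<phi> v" by blast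
      thus "a \<in> \<phi> ` A'" unfolding A'_def using a by blast
    qed
  qed
  moreover have "inj_on \<phi> A'" using inj_on_subset[OF inj, of A'] unfolding A'_def Vx_def by blast
  ultimately have cA': "card A' = card A" by (metis card_image)
  have fA': "finite A'" using fVx unfolding A'_def by simp
  have FV: "F \<subseteq> Vx" if FE: "F \<in> Ex" for F
  proof -
    obtain e where e: "e \<in> T" "F = exp_edge k e" using FE unfolding Ex_def exp_edges_def by blast
    have sg: "simple_graph n T" using tree unfolding is_tree_def by blast
    have "e \<subseteq> {..<n}" using e(1) sg by (rule simple_edge_sub)
    show ?thesis
    proof
      fix x assume x: "x \<in> F"
      show "x \<in> Vx"
      proof (cases x)
        case (Inl u)
        hence "u < n" using x e \<open>e \<subseteq> {..<n}\<close> by auto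
        thus ?thesis unfolding Vx_def exp_vertices_def Inl by blast
      next
        case (Inr p)
        hence "fst p = e" "snd p < k - 2" using x e by auto
        hence "Inr p \<in> {Inr (e, i) |e i. e \<in> T \<and> i < k - 2}" using e(1) by (cases p) auto
        thus ?thesis unfolding Vx_def exp_vertices_def Inr by blast
      qed
    qed
  qed
  have oddF: "odd (card {v \<in> A'. v \<in> F})" if F: "F \<in> Ex" for F
  proof -
    have s1: "{v \<in> A'. v \<in> F} = {v \<in> F. \<phi> v \<in> A}" using FV[OF F] unfolding A'_def by blast
    have "\<phi> ` F \<inter> A = \<phi> ` {v \<in> F. \<phi> v \<in> A}" by blast
    hence "\<phi> ` F \<inter> A = \<phi> ` {v \<in> A'. v \<in> F}" using s1 by simp
    moreover have "inj_on \<phi> {v \<in> A'. v \<in> F}" using inj_on_subset[OF inj, of "{v \<in> A'. v \<in> F}"] unfolding A'_def Vx_def by blast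
    ultimately have "card (\<phi> ` F \<inter> A) = card {v \<in> A'. v \<in> F}" by (simp add: card_image)
    moreover have "odd (card (\<phi> ` F \<inter> A))" using EA ed F unfolding Ex_def by blast
    ultimately show ?thesis by simp
  qed
  have fEx: "finite Ex" unfolding Ex_def exp_edges_def using fT by simp
  have cEx: "card Ex = n - 1" unfolding Ex_def exp_edges_def using cT by (simp add: card_image inj_exp_edge)
  have swap: "(\<Sum>F\<in>Ex. card {v \<in> A'. v \<in> F}) = (\<Sum>v\<in>A'. card {F \<in> Ex. v \<in> F})"
  proof -
    have "(\<Sum>F\<in>Ex. card {v \<in> A'. v \<in> F}) = (\<Sum>F\<in>Ex. \<Sum>v\<in>A'. if v \<in> F then 1 else 0)"
      using fA' by (simp add: sum.inter_filter[symmetric])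
    also have "\<dots> = (\<Sum>v\<in>A'. \<Sum>F\<in>Ex. if v \<in> F then 1 else 0)" by (rule sum.swap)
    also have "\<dots> = (\<Sum>v\<in>A'. card {F \<in> Ex. v \<in> F})"
      using fEx by (simp add: sum.inter_filter[symmetric])
    finally show ?thesis .
  qed
  have "even (\<Sum>F\<in>Ex. card {v \<in> A'. v \<in> F}) \<longleftrightarrow> even (card Ex)"
    using fEx oddF by (rule sum_odd_parity)
  hence o1: "odd (\<Sum>F\<in>Ex. card {v \<in> A'. v \<in> F})" using cEx ev n2 by simp
  have "even (\<Sum>v\<in>A'. card {F \<in> Ex. v \<in> F}) \<longleftrightarrow> even (card A')"
    using fA' by (rule sum_odd_parity) (use deg_exp od in \<open>auto simp: A'_def Vx_def Ex_def\<close>)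
  hence "even (\<Sum>v\<in>A'. card {F \<in> Ex. v \<in> F})" using cA' evA by simp
  thus False using o1 swap by simp
qed



lemma min_deg_ge:
  fixes b :: real
  assumes "d \<le> N" and "\<And>S. S \<subseteq> {..<N} \<Longrightarrow> card S = d \<Longrightarrow> b \<le> real (hdeg E S)"
  shows "b \<le> real (min_deg d {..<N} E)"
proof -
  have eq: "{hdeg E S | S. S \<subseteq> {..<N} \<and> card S = d} = (\<lambda>S. hdeg E S) ` {S. S \<subseteq> {..<N} \<and> card S = d}" by blast
  have "finite {S. S \<subseteq> {..<N} \<and> card S = d}" by (rule finite_subset[of _ "Pow {..<N}"]) auto
  moreover have "{..<d} \<in> {S. S \<subseteq> {..<N} \<and> card S = d}" using assms(1) by auto
  hence "{S. S \<subseteq> {..<N} \<and> card S = d} \<noteq> {}" by blast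
  ultimately have "Min {hdeg E S | S. S \<subseteq> {..<N} \<and> card S = d} \<in> {hdeg E S | S. S \<subseteq> {..<N} \<and> card S = d}"
    unfolding eq by (intro Min_in) simp_all
  then obtain S where "S \<subseteq> {..<N}" "card S = d" "min_deg d {..<N} E = hdeg E S"
    unfolding min_deg_def by blast
  thus ?thesis using assms(2) by simp
qed

lemma no_embed_two:
  assumes n2: "2 \<le> n" and tree: "is_tree n T" and a0: "0 < a" and an: "a < n"
    and EA: "\<forall>e\<in>E. e \<subseteq> {..<a} \<or> e \<inter> {..<a} = {}"
  shows "\<not> contains {..<n} E (exp_vertices 2 n T) (exp_edges 2 T)"
proof
  assume "contains {..<n} E (exp_vertices 2 n T) (exp_edges 2 T)"
  then obtain \<phi> where inj: "inj_on \<phi> (exp_vertices 2 n T)" and img: "\<phi> ` exp_vertices 2 n T \<subseteq> {..<n}"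
    and ed: "\<forall>F\<in>exp_edges 2 T. \<phi> ` F \<in> E" unfolding contains_def by blast
  have Vx: "exp_vertices 2 n T = Inl ` {..<n}" unfolding exp_vertices_def by auto
  have cV: "card (exp_vertices 2 n T) = n" unfolding Vx by (simp add: card_image)
  have "card (\<phi> ` exp_vertices 2 n T) = n" using card_image[OF inj] cV by simp
  hence imgV: "\<phi> ` exp_vertices 2 n T = {..<n}" using card_subset_eq[OF finite_lessThan img] by simp
  define R where "R = {(x, y). adj T x y}"
  have stp: "(\<phi> (Inl y) < a) = (\<phi> (Inl z) < a)" if "(y, z) \<in> R" for y z
  proof -
    have "{y, z} \<in> T" using that unfolding R_def adj_def by simp
    hence "exp_edge 2 {y, z} \<in> exp_edges 2 T" unfolding exp_edges_def by blast
    hence "\<phi> ` exp_edge 2 {y, z} \<in> E" using ed by blast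
    hence o: "\<phi> ` exp_edge 2 {y, z} \<subseteq> {..<a} \<or> \<phi> ` exp_edge 2 {y, z} \<inter> {..<a} = {}" by (rule EA[rule_format])
    have "Inl y \<in> exp_edge 2 {y, z}" "Inl z \<in> exp_edge 2 {y, z}" by simp_all
    hence m: "\<phi> (Inl y) \<in> \<phi> ` exp_edge 2 {y, z}" "\<phi> (Inl z) \<in> \<phi> ` exp_edge 2 {y, z}" by simp_all
    from o show ?thesis
    proof
      assume "\<phi> ` exp_edge 2 {y, z} \<subseteq> {..<a}"
      hence "\<phi> (Inl y) \<in> {..<a}" "\<phi> (Inl z) \<in> {..<a}" using m by (metis subsetD)+
      thus ?thesis by simp
    next
      assume "\<phi> ` exp_edge 2 {y, z} \<inter> {..<a} = {}"
      hence "\<phi> (Inl y) \<notin> {..<a}" "\<phi> (Inl z) \<notin> {..<a}" using m by (metis IntI empty_iff)+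
      thus ?thesis by simp
    qed
  qed
  have reach: "(\<phi> (Inl v) < a) = (\<phi> (Inl 0) < a)" if "v < n" for v
  proof -
    have cg: "connected_graph n T" using tree unfolding is_tree_def by blast
    have "(0, v) \<in> R\<^sup>*" using cg that n2 unfolding connected_graph_def R_def by simp
    thus ?thesis
    proof (induction rule: rtrancl_induct)
      case base thus ?case by simp
    next
      case (step y z) thus ?case using stp[of y z] by simp
    qed
  qed
  have i0: "0 \<in> \<phi> ` Inl ` {..<n}" using imgV an Vx by simp
  have ia: "a \<in> \<phi> ` Inl ` {..<n}" using imgV an Vx by simp
  obtain v where v: "v < n" "\<phi> (Inl v) = 0" using i0 by (auto simp: image_iff)
  obtain w where w: "w < n" "\<phi> (Inl w) = a" using ia by (auto simp: image_iff)
  have vw: "v < n" "\<phi> (Inl v) = 0" "w < n" "\<phi> (Inl w) = a" using v w by simp_all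
  have "(0 < a) = (\<phi> (Inl 0) < a)" using reach[OF vw(1)] vw(2) by simp
  moreover have "(a < a) = (\<phi> (Inl 0) < a)" using reach[OF vw(3)] vw(4) by simp
  ultimately show False using a0 by simp
qed

lemma deg_two:
  assumes vn: "v < n" and an: "a \<le> n"
  defines "E \<equiv> {e. e \<subseteq> {..<n} \<and> card e = 2 \<and> (e \<subseteq> {..<a} \<or> e \<inter> {..<a} = {})}"
  shows "min a (n - a) - 1 \<le> hdeg E {v}"
proof -
  define Cv where "Cv = (if v < a then {..<a} else {a..<n})"
  have CvE: "{v, w} \<in> {e \<in> E. {v} \<subseteq> e}" if "w \<in> Cv - {v}" for w
  proof -
    have w: "w \<in> Cv" "w \<noteq> v" using that by auto
    have c2: "card {v, w} = 2" using w by simp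
    have sub: "{v, w} \<subseteq> {..<n}" using w vn an unfolding Cv_def by (auto split: if_splits)
    have "{v, w} \<subseteq> {..<a} \<or> {v, w} \<inter> {..<a} = {}"
    proof (cases "v < a")
      case True thus ?thesis using w unfolding Cv_def by simp
    next
      case False
      hence "w \<in> {a..<n}" using w unfolding Cv_def by simp
      thus ?thesis using False by auto
    qed
    thus ?thesis using c2 sub unfolding E_def by blast
  qed
  have "card (Cv - {v}) \<le> card {e \<in> E. {v} \<subseteq> e}"
  proof (rule card_inj_on_le[where f="\<lambda>w. {v, w}"])
    show "inj_on (\<lambda>w. {v, w}) (Cv - {v})" by (rule inj_onI) (auto simp: doubleton_eq_iff)
    show "(\<lambda>w. {v, w}) ` (Cv - {v}) \<subseteq> {e \<in> E. {v} \<subseteq> e}" using CvE by blast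
    have "{e \<in> E. {v} \<subseteq> e} \<subseteq> Pow {..<n}" unfolding E_def by blast
    thus "finite {e \<in> E. {v} \<subseteq> e}" by (rule finite_subset) simp
  qed
  moreover have "card (Cv - {v}) = card Cv - 1"
  proof -
    have "v \<in> Cv" using vn unfolding Cv_def by simp
    moreover have "finite Cv" unfolding Cv_def by simp
    ultimately show ?thesis by (simp add: card_Diff_singleton)
  qed
  moreover have "min a (n - a) \<le> card Cv" unfolding Cv_def by simp
  ultimately show ?thesis unfolding hdeg_def by linarith
qed



lemma real_bound_odd:
  fixes C M1 h c :: nat
  assumes "C * M1 \<le> 2 * h * M1 + c * C" "0 < M1"
  shows "(1/2 - real c / (2 * real M1)) * real C \<le> real h"
proof -
  have r: "real C * real M1 \<le> 2 * real h * real M1 + real c * real C"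
    using assms(1) by (metis of_nat_add of_nat_le_iff of_nat_mult of_nat_numeral)
  have M: "(0::real) < real M1" using assms(2) by simp
  have "(1/2 - real c / (2 * real M1)) * real C = (real C * real M1 - real c * real C) / (2 * real M1)"
    using M by (simp add: field_simps)
  also have "\<dots> \<le> (2 * real h * real M1) / (2 * real M1)"
    using r M by (intro divide_right_mono) auto
  also have "\<dots> = real h" using M by simp
  finally show ?thesis .
qed

lemma real_bound_two:
  fixes n h :: nat
  assumes "n = 2 * h" "1 \<le> h"
  shows "(1/2 - 3 / real n) * real (n - 1) \<le> real h - 1"
proof -
  have n: "(2::real) \<le> real n" using assms by simp
  have "3 / real n \<le> 3 / 2" using n by (intro divide_left_mono) auto
  moreover have "(1/2 - 3 / real n) * real (n - 1) = real n / 2 - 1/2 - 3 + 3 / real n"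
    using n by (simp add: of_nat_diff field_simps)
  moreover have "real n / 2 = real h" using assms by simp
  ultimately show ?thesis by linarith
qed

theorem theorem3p3:
  fixes k d :: nat
  assumes "1 \<le> d" and "d < k"
  shows "\<exists>f :: nat \<Rightarrow> real. f \<longlonglongrightarrow> 0 \<and>
    (\<forall>n::nat. even n \<and> 0 < n \<longrightarrow>
      (let N = (k - 1) * n - k + 2 in
        \<exists>E :: nat set set. kgraph k {..<N} E \<and>
          real (min_deg d {..<N} E) \<ge> (1/2 - f N) * real ((N - d) choose (k - d)) \<and>
          \<not> (\<exists>T. is_tree n T \<and> (\<forall>v<n. odd (gdeg T v)) \<and>
               contains {..<N} E (exp_vertices k n T) (exp_edges k T))))"
proof (cases "k = 2")
  case True
  hence d1: "d = 1" using assms by simp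
  show ?thesis
  proof (intro exI[of _ "\<lambda>N. 3 / real N"] conjI allI impI)
    show "(\<lambda>N. 3 / real N) \<longlonglongrightarrow> 0" by (rule lim_const_over_n)
    fix n :: nat assume nn: "even n \<and> 0 < n"
    define h where "h = n div 2"
    have nh: "n = 2 * h" "1 \<le> h" using nn unfolding h_def by auto
    have NN: "(k - 1) * n - k + 2 = n" using True nh by simp
    define E where "E = {e. e \<subseteq> {..<n} \<and> card e = 2 \<and> (e \<subseteq> {..<h} \<or> e \<inter> {..<h} = {})}"
    have kg: "kgraph k {..<n} E" unfolding kgraph_def E_def True by auto
    have md: "(1/2 - 3 / real n) * real ((n - d) choose (k - d)) \<le> real (min_deg d {..<n} E)"
    proof (rule min_deg_ge)
      show "d \<le> n" using d1 nh by simp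
      fix S assume S: "S \<subseteq> {..<n}" "card S = d"
      then obtain v where v: "S = {v}" using d1 card_1_singletonE by metis
      have "v < n" using S v by auto
      hence "min h (n - h) - 1 \<le> hdeg E {v}" unfolding E_def using deg_two[of v n h] nh by simp
      hence "h - 1 \<le> hdeg E S" using nh v by simp
      hence "real h - 1 \<le> real (hdeg E S)" using nh by linarith
      moreover have "(1/2 - 3 / real n) * real ((n - d) choose (k - d)) \<le> real h - 1"
        using real_bound_two[OF nh] d1 True by simp
      ultimately show "(1/2 - 3 / real n) * real ((n - d) choose (k - d)) \<le> real (hdeg E S)" by linarith
    qed
    have ne: "\<not> (\<exists>T. is_tree n T \<and> (\<forall>v<n. odd (gdeg T v)) \<and>
               contains {..<n} E (exp_vertices k n T) (exp_edges k T))"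
    proof
      assume "\<exists>T. is_tree n T \<and> (\<forall>v<n. odd (gdeg T v)) \<and> contains {..<n} E (exp_vertices k n T) (exp_edges k T)"
      then obtain T where T: "is_tree n T" "contains {..<n} E (exp_vertices 2 n T) (exp_edges 2 T)"
        using True by blast
      have n2': "2 \<le> n" and h0: "0 < h" and hn: "h < n" using nh by simp_all
      have EAh: "\<forall>e\<in>E. e \<subseteq> {..<h} \<or> e \<inter> {..<h} = {}"
      proof
        fix e assume "e \<in> E"
        thus "e \<subseteq> {..<h} \<or> e \<inter> {..<h} = {}" unfolding E_def mem_Collect_eq by (elim conjE)
      qed
      have "\<not> contains {..<n} E (exp_vertices 2 n T) (exp_edges 2 T)"
        using no_embed_two[OF n2' T(1) h0 hn EAh] .
      thus False using T by blast
    qed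
    show "let N = (k - 1) * n - k + 2 in \<exists>E :: nat set set. kgraph k {..<N} E \<and>
          real (min_deg d {..<N} E) \<ge> (1/2 - 3 / real N) * real ((N - d) choose (k - d)) \<and>
          \<not> (\<exists>T. is_tree n T \<and> (\<forall>v<n. odd (gdeg T v)) \<and>
               contains {..<N} E (exp_vertices k n T) (exp_edges k T))"
      unfolding Let_def NN using kg md ne by blast
  qed
next
  case False
  hence k3: "3 \<le> k" using assms by simp
  define c where "c = (d+3)*(k-d) + (k-d-1)*(d+1)*(k-d)"
  define f where "f N = (if d + 2 \<le> N then real c / (2 * real (N - d - 1)) else 1)" for N
  show ?thesis
  proof (intro exI[of _ f] conjI allI impI)
    have "(\<lambda>j. f (j + (d + 2))) = (\<lambda>j. (real c / 2) * inverse (real (Suc j)))"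
      unfolding f_def by (rule ext) (simp add: field_simps)
    moreover have "(\<lambda>j. (real c / 2) * inverse (real (Suc j))) \<longlonglongrightarrow> (real c / 2) * 0"
      by (rule tendsto_mult[OF tendsto_const LIMSEQ_inverse_real_of_nat])
    ultimately have "(\<lambda>j. f (j + (d + 2))) \<longlonglongrightarrow> 0" by simp
    thus "f \<longlonglongrightarrow> 0" by (rule LIMSEQ_offset)
    fix n :: nat assume nn: "even n \<and> 0 < n"
    have n2: "2 \<le> n" using nn by presburger
    define N where "N = (k - 1) * n - k + 2"
    have NN: "N = n + (n - 1) * (k - 2)" unfolding N_def by (rule N_eq[OF n2 k3])
    have kN: "k \<le> N"
    proof -
      have "1 * (k - 2) \<le> (n - 1) * (k - 2)" using n2 by (intro mult_right_mono) auto
      thus ?thesis using NN n2 k3 by linarith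
    qed
    define q where "q = 2 * (N div 4)"
    define A where "A = {x. x < 2*q \<and> even x}"
    define E where "E = {e. e \<subseteq> {..<N} \<and> card e = k \<and> odd (card (e \<inter> A))}"
    have kg: "kgraph k {..<N} E" unfolding kgraph_def E_def by simp
    have md: "(1/2 - f N) * real ((N - d) choose (k - d)) \<le> real (min_deg d {..<N} E)"
    proof (rule min_deg_ge)
      show "d \<le> N" using kN assms by simp
      fix S assume S: "S \<subseteq> {..<N}" "card S = d"
      show "(1/2 - f N) * real ((N - d) choose (k - d)) \<le> real (hdeg E S)"
      proof (cases "d + 2 \<le> N")
        case True
        have "((N-d) choose (k-d)) * (N-d-1) \<le> 2 * hdeg E S * (N-d-1) + c * ((N-d) choose (k-d))"
          using deg_bound[OF assms True S] unfolding E_def A_def q_def c_def by simp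
        hence "(1/2 - real c / (2 * real (N-d-1))) * real ((N-d) choose (k-d)) \<le> real (hdeg E S)"
          by (rule real_bound_odd) (use True in simp)
        thus ?thesis unfolding f_def using True by simp
      next
        case False
        thus ?thesis unfolding f_def by simp
      qed
    qed
    have ne: "\<not> (\<exists>T. is_tree n T \<and> (\<forall>v<n. odd (gdeg T v)) \<and>
               contains {..<N} E (exp_vertices k n T) (exp_edges k T))"
    proof
      assume "\<exists>T. is_tree n T \<and> (\<forall>v<n. odd (gdeg T v)) \<and> contains {..<N} E (exp_vertices k n T) (exp_edges k T)"
      then obtain T where T: "is_tree n T" "\<forall>v<n. odd (gdeg T v)" "contains {..<N} E (exp_vertices k n T) (exp_edges k T)"
        by blast
      have AV: "A \<subseteq> {..<N}" unfolding A_def q_def by auto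
      have cA: "card A = q"
      proof -
        have "A = (\<lambda>i. 2 * i) ` {..<q}" unfolding A_def by (auto elim!: evenE)
        thus ?thesis by (simp add: card_image inj_on_def)
      qed
      have "\<not> contains {..<N} E (exp_vertices k n T) (exp_edges k T)"
      proof (rule no_embed_odd[OF k3 n2 _ T(1) T(2) N_def AV])
        show "even n" using nn by simp
        show "even (card A)" using cA unfolding q_def by simp
        show "\<forall>e\<in>E. odd (card (e \<inter> A))"
        proof
          fix e assume "e \<in> E"
          thus "odd (card (e \<inter> A))" unfolding E_def mem_Collect_eq by (elim conjE)
        qed
      qed
      thus False using T by blast
    qed
    show "let N = (k - 1) * n - k + 2 in \<exists>E :: nat set set. kgraph k {..<N} E \<and>
          real (min_deg d {..<N} E) \<ge> (1/2 - f N) * real ((N - d) choose (k - d)) \<and>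
          \<not> (\<exists>T. is_tree n T \<and> (\<forall>v<n. odd (gdeg T v)) \<and>
               contains {..<N} E (exp_vertices k n T) (exp_edges k T))"
      unfolding Let_def N_def[symmetric] using kg md ne by blast
  qed
qed

end
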